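(* Let $F$ be a graph of diameter $2$, $n=|V(F)|$, $t=\delta(F)$, and let $l>n$ be an integer. For every subgraph $Y$ of $F_{2l}$ that is isomorphic to $F$ and contains the vertex $2l$: (1) the edges $(1,2l),(2,2l),\dots,(t,2l)$ all belong to $Y$; (2) $Y$ is a subgraph of $X$.
   Context: All graphs are simple, finite, undirected; $\delta(F)$ is the minimum degree of $F$. $A_{2l-1}$ is the graph with vertex set $\{1,\dots,2l-1\}$ in which distinct $i,j$ are adjacent iff $|i-j|\le l-1$. $F_{2l}$ is obtained from $A_{2l-1}$ by adding a new vertex $2l$ joined exactly to $1,2,\dots,t$. $X$ is the subgraph of $F_{2l}$ induced by the vertex set $\{1,2,\dots,l+t-1\}\cup\{2l\}$. *)

theory Defs
  imports Main
begin

type_synonym 'a graph = "'a set \<times> 'a set set"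

definition verts :: "'a graph \<Rightarrow> 'a set" where "verts G = fst G"
definition edges :: "'a graph \<Rightarrow> 'a set set" where "edges G = snd G"

definition simple_graph :: "'a graph \<Rightarrow> bool" where
  "simple_graph G \<longleftrightarrow> finite (verts G) \<and>
     edges G \<subseteq> {{u, v} | u v. u \<in> verts G \<and> v \<in> verts G \<and> u \<noteq> v}"

definition adj :: "'a graph \<Rightarrow> 'a \<Rightarrow> 'a \<Rightarrow> bool" where
  "adj G u v \<longleftrightarrow> {u, v} \<in> edges G"

definition neighbours :: "'a graph \<Rightarrow> 'a \<Rightarrow> 'a set" where
  "neighbours G v = {u \<in> verts G. adj G v u}"

definition degree :: "'a graph \<Rightarrow> 'a \<Rightarrow> nat" where
  "degree G v = card (neighbours G v)"

definition min_degree :: "'a graph \<Rightarrow> nat" where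
  "min_degree G = Min (degree G ` verts G)"

definition walk :: "'a graph \<Rightarrow> 'a list \<Rightarrow> bool" where
  "walk G xs \<longleftrightarrow> xs \<noteq> [] \<and> set xs \<subseteq> verts G \<and>
     (\<forall>i. Suc i < length xs \<longrightarrow> adj G (xs ! i) (xs ! Suc i))"

definition graph_connected :: "'a graph \<Rightarrow> bool" where
  "graph_connected G \<longleftrightarrow> (\<forall>u \<in> verts G. \<forall>v \<in> verts G.
     \<exists>xs. walk G xs \<and> hd xs = u \<and> last xs = v)"

definition gdist :: "'a graph \<Rightarrow> 'a \<Rightarrow> 'a \<Rightarrow> nat" where
  "gdist G u v = (LEAST k. \<exists>xs. walk G xs \<and> hd xs = u \<and> last xs = v \<and> length xs = Suc k)"

definition diameter :: "'a graph \<Rightarrow> nat" where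
  "diameter G = Max {gdist G u v | u v. u \<in> verts G \<and> v \<in> verts G}"

definition has_diameter :: "'a graph \<Rightarrow> nat \<Rightarrow> bool" where
  "has_diameter G d \<longleftrightarrow> verts G \<noteq> {} \<and> graph_connected G \<and> diameter G = d"

definition subgraph :: "'a graph \<Rightarrow> 'a graph \<Rightarrow> bool" where
  "subgraph H G \<longleftrightarrow> simple_graph H \<and> verts H \<subseteq> verts G \<and> edges H \<subseteq> edges G"

definition induced_subgraph :: "'a graph \<Rightarrow> 'a set \<Rightarrow> 'a graph" where
  "induced_subgraph G S = (verts G \<inter> S, {e \<in> edges G. e \<subseteq> S})"

definition isomorphic :: "'a graph \<Rightarrow> 'b graph \<Rightarrow> bool" where
  "isomorphic G H \<longleftrightarrow> (\<exists>f. bij_betw f (verts G) (verts H) \<and>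
     (\<forall>u \<in> verts G. \<forall>v \<in> verts G. adj G u v \<longleftrightarrow> adj H (f u) (f v)))"

definition A_graph :: "nat \<Rightarrow> nat graph" where
  "A_graph l = ({1..2*l-1},
     {{i, j} | i j. i \<in> {1..2*l-1} \<and> j \<in> {1..2*l-1} \<and> i \<noteq> j \<and>
        i - j \<le> l - 1 \<and> j - i \<le> l - 1})"

definition F_graph :: "nat \<Rightarrow> nat \<Rightarrow> nat graph" where
  "F_graph l t = (verts (A_graph l) \<union> {2*l},
     edges (A_graph l) \<union> {{i, 2*l} | i. i \<in> {1..t}})"

definition X_graph :: "nat \<Rightarrow> nat \<Rightarrow> nat graph" where
  "X_graph l t = induced_subgraph (F_graph l t) ({1..l+t-1} \<union> {2*l})"

end

theory Submission
  imports Defs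
begin

lemma edge_F:
  assumes "{a,b} \<in> edges (F_graph l t)" "t < l"
  shows "(a \<in> {1..2*l-1} \<and> b \<in> {1..2*l-1} \<and> a-b \<le> l-1 \<and> b-a \<le> l-1)
     \<or> (a = 2*l \<and> b \<in> {1..t}) \<or> (b = 2*l \<and> a \<in> {1..t})"
  using assms unfolding F_graph_def A_graph_def edges_def verts_def
  by (auto simp: doubleton_eq_iff)

lemma diam2_walk:
  assumes "has_diameter F 2" "simple_graph F" "u \<in> verts F" "w \<in> verts F" "u \<noteq> w"
  shows "adj F u w \<or> (\<exists>x \<in> verts F. adj F u x \<and> adj F x w)"
proof -
  have fin: "finite {gdist F u v | u v. u \<in> verts F \<and> v \<in> verts F}"
  proof -
    have "{gdist F u v | u v. u \<in> verts F \<and> v \<in> verts F} = (\<lambda>(u,v). gdist F u v) ` (verts F \<times> verts F)"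
      by auto
    thus ?thesis using assms(2) unfolding simple_graph_def by simp
  qed
  have "gdist F u w \<le> diameter F" unfolding diameter_def
    by (rule Max_ge[OF fin]) (use assms in auto)
  hence le: "gdist F u w \<le> 2" using assms(1) unfolding has_diameter_def by simp
  obtain xs where xs: "walk F xs" "hd xs = u" "last xs = w"
    using assms unfolding has_diameter_def graph_connected_def by blast
  have ex: "\<exists>k xs. walk F xs \<and> hd xs = u \<and> last xs = w \<and> length xs = Suc k"
    using xs by (intro exI[of _ "length xs - 1"] exI[of _ xs]) (auto simp: walk_def)
  obtain ys where ys: "walk F ys" "hd ys = u" "last ys = w" "length ys = Suc (gdist F u w)"
    using LeastI_ex[OF ex] unfolding gdist_def by blast
  have W: "\<And>i. Suc i < length ys \<Longrightarrow> adj F (ys ! i) (ys ! Suc i)" "set ys \<subseteq> verts F"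
    using ys(1) unfolding walk_def by auto
  consider "length ys = 1" | "length ys = 2" | "length ys = 3" using ys(4) le by linarith
  then show ?thesis
  proof cases
    case 1
    then obtain a where "ys = [a]" by (cases ys) auto
    then show ?thesis using ys assms by simp
  next
    case 2
    then obtain a b where "ys = [a,b]" by (cases ys; cases "tl ys") auto
    then show ?thesis using ys W(1)[of 0] by simp
  next
    case 3
    then obtain a b c where e: "ys = [a,b,c]" by (cases ys; cases "tl ys"; cases "tl (tl ys)") auto
    then show ?thesis using ys W(1)[of 0] W(1)[of 1] W(2) by auto
  qed
qed

theorem lemma4:
  fixes F :: "'a graph" and l n t :: nat and Y :: "nat graph"
  assumes "simple_graph F"
    and "has_diameter F 2"
    and "n = card (verts F)"
    and "t = min_degree F"
    and "l > n"
    and "subgraph Y (F_graph l t)"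
    and "isomorphic F Y"
    and "2*l \<in> verts Y"
  shows "(\<forall>i \<in> {1..t}. {i, 2*l} \<in> edges Y) \<and> subgraph Y (X_graph l t)"
proof -
  have finF: "finite (verts F)" using assms(1) unfolding simple_graph_def by simp
  have neF: "verts F \<noteq> {}" using assms(2) unfolding has_diameter_def by simp
  obtain f where f: "bij_betw f (verts F) (verts Y)"
    and fadj: "\<And>u v. u \<in> verts F \<Longrightarrow> v \<in> verts F \<Longrightarrow> adj F u v \<longleftrightarrow> adj Y (f u) (f v)"
    using assms(7) unfolding isomorphic_def by blast
  have VY: "verts Y = f ` verts F" and inj: "inj_on f (verts F)"
    using f by (auto simp: bij_betw_def)
  have degge: "degree F u \<ge> t" if "u \<in> verts F" for u
    unfolding assms(4) min_degree_def using finF that by (intro Min_le) auto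
  have degle: "degree F u \<le> n" for u
    unfolding assms(3) degree_def neighbours_def using finF by (intro card_mono) auto
  have tn: "t \<le> n" using degge degle neF by (meson ex_in_conv le_trans)
  hence tl: "t < l" using assms(5) by simp
  have nbY: "neighbours Y (f u) = f ` neighbours F u" if u: "u \<in> verts F" for u
  proof -
    have "neighbours Y (f u) = {y \<in> f ` verts F. adj Y (f u) y}" unfolding neighbours_def VY ..
    also have "\<dots> = f ` {v \<in> verts F. adj Y (f u) (f v)}" by auto
    also have "\<dots> = f ` neighbours F u" unfolding neighbours_def using fadj u by auto
    finally show ?thesis .
  qed
  have degY: "degree Y (f u) = degree F u" if u: "u \<in> verts F" for u
    unfolding degree_def nbY[OF u]
    by (rule card_image) (rule inj_on_subset[OF inj], auto simp: neighbours_def)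
  obtain u0 where u0: "u0 \<in> verts F" "f u0 = 2*l" using assms(8) VY by auto
  have sub: "edges Y \<subseteq> edges (F_graph l t)" "verts Y \<subseteq> verts (F_graph l t)" "simple_graph Y"
    using assms(6) unfolding subgraph_def by auto
  have nb2: "neighbours Y (2*l) \<subseteq> {1..t}"
  proof
    fix v assume "v \<in> neighbours Y (2*l)"
    hence "{2*l, v} \<in> edges (F_graph l t)" using sub unfolding neighbours_def adj_def by auto
    from edge_F[OF this tl] tl show "v \<in> {1..t}" by auto
  qed
  have "card (neighbours Y (2*l)) \<ge> t" using degY[OF u0(1)] degge[OF u0(1)] u0(2)
    unfolding degree_def by simp
  hence nbeq: "neighbours Y (2*l) = {1..t}"
    using nb2 card_mono[OF _ nb2] by (intro card_subset_eq) auto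
  have part1: "\<forall>i \<in> {1..t}. {i, 2*l} \<in> edges Y"
  proof
    fix i assume "i \<in> {1..t}"
    hence "adj Y (2*l) i" using nbeq unfolding neighbours_def by blast
    thus "{i, 2*l} \<in> edges Y" unfolding adj_def by (simp add: insert_commute)
  qed
  have nbd: "v \<in> {1..l+t-1} \<union> {2*l}" if y: "y \<in> {1..t}" and a: "adj Y y v" for y v
  proof -
    have "{y, v} \<in> edges (F_graph l t)" using a sub unfolding adj_def by auto
    from edge_F[OF this tl] y tl show ?thesis by auto
  qed
  have vS: "v \<in> {1..l+t-1} \<union> {2*l}" if v: "v \<in> verts Y" for v
  proof (cases "v = 2*l")
    case False
    obtain w where w: "w \<in> verts F" "f w = v" using v VY by auto
    have "u0 \<noteq> w" using False u0 w by auto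
    from diam2_walk[OF assms(2) assms(1) u0(1) w(1) this]
    have "adj Y (2*l) v \<or> (\<exists>x \<in> verts Y. adj Y (2*l) x \<and> adj Y x v)"
      using fadj u0 w VY by fastforce
    then show ?thesis
    proof
      assume "adj Y (2*l) v"
      hence "v \<in> neighbours Y (2*l)" using v unfolding neighbours_def by simp
      thus ?thesis using nbeq tl by auto
    next
      assume "\<exists>x \<in> verts Y. adj Y (2*l) x \<and> adj Y x v"
      then obtain x where "x \<in> verts Y" "adj Y (2*l) x" "adj Y x v" by blast
      hence "x \<in> {1..t}" using nbeq unfolding neighbours_def by blast
      thus ?thesis using nbd \<open>adj Y x v\<close> by blast
    qed
  qed simp
  have vX: "verts (X_graph l t) = verts (F_graph l t) \<inter> ({1..l+t-1} \<union> {2*l})"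
    and eX: "edges (X_graph l t) = {e \<in> edges (F_graph l t). e \<subseteq> {1..l+t-1} \<union> {2*l}}"
    unfolding X_graph_def induced_subgraph_def verts_def edges_def by auto
  have "subgraph Y (X_graph l t)"
    unfolding subgraph_def vX eX
  proof (intro conjI)
    show "simple_graph Y" by (rule sub(3))
    show "verts Y \<subseteq> verts (F_graph l t) \<inter> ({1..l + t - 1} \<union> {2 * l})"
      using sub(2) vS by blast
    show "edges Y \<subseteq> {e \<in> edges (F_graph l t). e \<subseteq> {1..l + t - 1} \<union> {2 * l}}"
    proof
      fix e assume e: "e \<in> edges Y"
      then obtain u v where "e = {u,v}" "u \<in> verts Y" "v \<in> verts Y"
        using sub(3) unfolding simple_graph_def by blast
      thus "e \<in> {e \<in> edges (F_graph l t). e \<subseteq> {1..l + t - 1} \<union> {2 * l}}"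
        using e sub(1) vS by blast
    qed
  qed
  with part1 show ?thesis by simp
qed

end
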